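(* Let $B=\sum_{i=1}^k w_i\,\mathcal N(\mu_i,1-\delta)$ be a Gaussian mixture on $\mathbb R$ with weights $w_i>0$, $\sum_i w_i=1$, centers $\mu_i\in\mathbb R$ and $\delta\in(0,1]$. Let $m'\ge1$ be an integer and $\lambda\ge0$, and suppose that every polynomial $p:\mathbb R\to\mathbb R$ of degree at most $m'$ with $\mathbf E_{x\sim\mathcal N(0,1)}[p(x)^2]=1$ satisfies $\big|\mathbf E_{x\sim B}[p(x)]-\mathbf E_{x\sim\mathcal N(0,1)}[p(x)]\big|\le\lambda$. Let $A$ be the discrete distribution that assigns mass $w_i$ to the point $\mu_i/\sqrt\delta$ for each $i\in[k]$. Then every polynomial $p$ of degree at most $m'$ with $\mathbf E_{x\sim\mathcal N(0,1)}[p(x)^2]=1$ satisfies $$\big|\mathbf E_{x\sim A}[p(x)]-\mathbf E_{x\sim\mathcal N(0,1)}[p(x)]\big|\le \sqrt{m'}\,\lambda\,\delta^{-m'/2}.$$ *)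

theory Defs
  imports "HOL-Probability.Probability" "HOL-Computational_Algebra.Polynomial"
begin

definition gauss_exp :: "real \<Rightarrow> real \<Rightarrow> (real \<Rightarrow> real) \<Rightarrow> real" where
  "gauss_exp m v f =
     (if v = 0 then f m else (LINT x|lborel. normal_density m (sqrt v) x * f x))"

definition std_gauss_exp :: "(real \<Rightarrow> real) \<Rightarrow> real" where
  "std_gauss_exp f = gauss_exp 0 1 f"

definition mixture_exp :: "nat \<Rightarrow> (nat \<Rightarrow> real) \<Rightarrow> (nat \<Rightarrow> real) \<Rightarrow> real \<Rightarrow> (real \<Rightarrow> real) \<Rightarrow> real" where
  "mixture_exp k w mu v f = (\<Sum>i<k. w i * gauss_exp (mu i) v f)"

definition discrete_exp :: "nat \<Rightarrow> (nat \<Rightarrow> real) \<Rightarrow> (nat \<Rightarrow> real) \<Rightarrow> (real \<Rightarrow> real) \<Rightarrow> real" where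
  "discrete_exp k w a f = (\<Sum>i<k. w i * f (a i))"

end

theory Submission
  imports Defs
begin

definition mom :: "nat \<Rightarrow> real" where
  "mom n = (if even n then fact n / (2 ^ (n div 2) * fact (n div 2)) else 0)"

lemma mom_0[simp]: "mom 0 = 1" by (simp add: mom_def)
lemma mom_1[simp]: "mom (Suc 0) = 0" by (simp add: mom_def)
lemma mom_SS: "mom (Suc (Suc n)) = real (Suc n) * mom n"
proof (cases "even n")
  case True
  then obtain k where k: "n = 2*k" by blast
  have "Suc (Suc n) = 2 * Suc k" using k by simp
  have e: "even (Suc (Suc n))" using True by simp
  have "mom (Suc (Suc n)) = fact (2*k+2) / (2 ^ (k+1) * fact (k+1))"
    using k e by (simp add: mom_def)
  also have "fact (2*k+2) = (real (2*k+2) * real (2*k+1)) * (fact (2*k) :: real)"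
    by (simp add: fact_Suc)
  also have "(2::real) ^ (k+1) * fact (k+1) = (2 * real (k+1)) * (2^k * fact k)"
    by (simp add: fact_Suc)
  also have "real (2*k+2) * real (2*k+1) * fact (2*k) / (2 * real (k+1) * (2^k * fact k))
      = real (2*k+1) * (fact (2*k) / (2^k * fact k))"
  proof -
    have "real (2*k+2) = 2 * real (k+1)" by simp
    moreover have "(2 * real (k+1)) \<noteq> 0" by simp
    ultimately show ?thesis
      by (metis (no_types, lifting) mult.assoc nonzero_mult_divide_mult_cancel_left times_divide_eq_right)
  qed
  also have "\<dots> = real (Suc n) * mom n" using k by (simp add: mom_def)
  finally show ?thesis .
next
  case False then show ?thesis by (simp add: mom_def)
qed

definition Gm :: "real poly \<Rightarrow> real" where
  "Gm p = (\<Sum>n\<le>degree p. coeff p n * mom n)"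

lemma Gm_le: assumes "degree p \<le> N" shows "Gm p = (\<Sum>n\<le>N. coeff p n * mom n)"
  unfolding Gm_def
  by (rule sum.mono_neutral_left) (use assms in \<open>auto simp: coeff_eq_0\<close>)

lemma Gm_add: "Gm (p + q) = Gm p + Gm q"
proof -
  define N where "N = max (degree p) (degree q)"
  have "degree (p+q) \<le> N" unfolding N_def by (rule degree_add_le) auto
  then show ?thesis
    using Gm_le[of p N] Gm_le[of q N] Gm_le[of "p+q" N]
    by (simp add: N_def distrib_right sum.distrib)
qed

lemma Gm_smult: "Gm (smult c p) = c * Gm p"
  using Gm_le[of "smult c p" "degree p"] degree_smult_le[of c p]
  by (simp add: Gm_def sum_distrib_left mult.assoc)

lemma Gm_minus: "Gm (- p) = - Gm p"
  using Gm_smult[of "-1" p] by simp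

lemma Gm_diff: "Gm (p - q) = Gm p - Gm q"
  using Gm_add[of p "-q"] Gm_minus[of q] by simp

lemma Gm_sum: "Gm (sum f A) = (\<Sum>i\<in>A. Gm (f i))"
proof (induction A rule: infinite_finite_induct)
  case (insert x F) then show ?case by (simp add: Gm_add)
qed (auto simp: Gm_def)

lemma Gm_const[simp]: "Gm [:c:] = c"
  by (simp add: Gm_def)

lemma Gm_stein: "Gm (pCons 0 q) = Gm (pderiv q)"
proof -
  define M where "M = degree q"
  have d1: "degree (pCons 0 q) \<le> Suc M" unfolding M_def by (simp add: degree_pCons_le)
  have d2: "degree (pderiv q) \<le> M" unfolding M_def by (simp add: degree_pderiv)
  have "Gm (pCons 0 q) = (\<Sum>n\<le>Suc M. coeff (pCons 0 q) n * mom n)" by (rule Gm_le[OF d1])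
  also have "\<dots> = (\<Sum>n\<le>M. coeff q n * mom (Suc n))"
    by (subst sum.atMost_Suc_shift) simp
  also have "\<dots> = (\<Sum>n\<le>Suc M. coeff q n * mom (Suc n))"
    by (simp add: M_def coeff_eq_0)
  also have "\<dots> = (\<Sum>n\<le>M. coeff q (Suc n) * mom (Suc (Suc n)))"
    by (subst sum.atMost_Suc_shift) simp
  also have "\<dots> = (\<Sum>n\<le>M. coeff (pderiv q) n * mom n)"
    by (simp add: coeff_pderiv mom_SS mult_ac)
  also have "\<dots> = Gm (pderiv q)" by (rule Gm_le[OF d2, symmetric])
  finally show ?thesis .
qed

lemma Gm_X_mult: "Gm ([:0,1:] * q) = Gm (pderiv q)"
  using Gm_stein by simp

fun He :: "nat \<Rightarrow> real poly" where
  "He 0 = 1"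
| "He (Suc 0) = [:0,1:]"
| "He (Suc (Suc n)) = [:0,1:] * He (Suc n) - smult (real (Suc n)) (He n)"

lemma He_rec: "He (Suc n) = [:0,1:] * He n - smult (real n) (He (n - 1))"
  by (cases n) auto

lemma He_deg: "degree (He n) = n \<and> coeff (He n) n = 1"
proof (induction n rule: He.induct)
  case (3 n)
  have a: "degree ([:0,1:] * He (Suc n)) \<le> Suc (Suc n)"
    using degree_mult_le[of "[:0,1:]" "He (Suc n)"] 3 by simp
  have b: "degree (smult (real (Suc n)) (He n)) \<le> Suc (Suc n)"
    using degree_smult_le[of "real (Suc n)" "He n"] 3 by simp
  have c1: "coeff (He n) (Suc (Suc n)) = 0" using 3 coeff_eq_0[of "He n" "Suc (Suc n)"] by simp
  have c2: "coeff (He (Suc n)) (Suc n) = 1" using 3 by simp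
  have c: "coeff (He (Suc (Suc n))) (Suc (Suc n)) = 1"
  proof -
    have "coeff (He (Suc (Suc n))) (Suc (Suc n)) = coeff ([:0,1:] * He (Suc n)) (Suc(Suc n)) - real (Suc n) * coeff (He n) (Suc (Suc n))"
      by (simp only: He.simps coeff_diff coeff_smult)
    also have "coeff ([:0,1:] * He (Suc n)) (Suc(Suc n)) = coeff (He (Suc n)) (Suc n)" by simp
    finally show ?thesis using c1 c2 by simp
  qed
  have "degree (He (Suc (Suc n))) \<le> Suc (Suc n)"
    using degree_diff_le[OF a b] by simp
  moreover have "Suc (Suc n) \<le> degree (He (Suc (Suc n)))" by (rule le_degree) (simp add: c del: He.simps)
  ultimately show ?case using c by (simp del: He.simps)
qed auto

lemma He_pderiv: "pderiv (He n) = smult (real n) (He (n - 1))"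
proof (induction n rule: He.induct)
  case 1 then show ?case by simp
next
  case 2 then show ?case by (simp add: pderiv_pCons)
next
  case (3 n)
  have r: "He (Suc n) = [:0,1:] * He n - smult (real n) (He (n - 1))" by (rule He_rec)
  have "pderiv (He (Suc (Suc n))) = He (Suc n) + [:0,1:] * pderiv (He (Suc n)) - smult (real (Suc n)) (pderiv (He n))"
    by (simp add: pderiv_diff pderiv_mult pderiv_smult pderiv_pCons algebra_simps)
  also have "\<dots> = He (Suc n) + smult (real (Suc n)) ([:0,1:] * He n - smult (real n) (He (n - 1)))"
    using 3 by (simp add: algebra_simps smult_diff_right)
  also have "\<dots> = smult (real (Suc (Suc n))) (He (Suc n))"
  proof -
    have e: "smult (real (Suc (Suc n))) (He (Suc n)) = He (Suc n) + smult (real (Suc n)) (He (Suc n))"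
      by (metis add.commute of_nat_Suc smult_1_left smult_add_left)
    show ?thesis unfolding e r[symmetric] by simp
  qed
  finally show ?case by simp
qed

lemma He_pderiv_Suc: "pderiv (He (Suc n)) = smult (real (Suc n)) (He n)"
  using He_pderiv[of "Suc n"] by simp

declare He.simps(3)[simp del]

lemma pderiv_funpow: "degree p \<le> n \<Longrightarrow> (pderiv ^^ n) p = [:fact n * coeff p n:]"
proof (induction n arbitrary: p)
  case 0
  then have "p = [:coeff p 0:]" using degree_0_id[of p] by simp
  then show ?case by (metis fact_0 mult_1 funpow_0)
next
  case (Suc n)
  have "degree (pderiv p) \<le> n" using Suc.prems by (simp add: degree_pderiv)
  then have "(pderiv ^^ n) (pderiv p) = [:fact n * coeff (pderiv p) n:]" by (rule Suc.IH)
  then show ?case by (simp add: funpow_Suc_right coeff_pderiv fact_Suc mult_ac del: funpow.simps)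
qed

lemma Gm_He_mult: "Gm (He n * q) = Gm ((pderiv ^^ n) q)"
proof (induction n arbitrary: q rule: He.induct)
  case 1 then show ?case by simp
next
  case (2 q) then show ?case using Gm_X_mult[of q] by simp
next
  case (3 n q)
  have "He (Suc (Suc n)) * q = [:0,1:] * (He (Suc n) * q) - smult (real (Suc n)) (He n * q)"
    by (subst He.simps(3)) (simp del: He.simps add: algebra_simps)
  then have "Gm (He (Suc (Suc n)) * q) = Gm (pderiv (He (Suc n) * q)) - real (Suc n) * Gm (He n * q)"
    by (simp only: Gm_diff Gm_smult Gm_X_mult)
  also have "pderiv (He (Suc n) * q) = He (Suc n) * pderiv q + smult (real (Suc n)) (He n * q)"
    by (simp del: He.simps add: pderiv_mult He_pderiv_Suc algebra_simps)
  finally have "Gm (He (Suc (Suc n)) * q) = Gm (He (Suc n) * pderiv q)"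
    by (simp add: Gm_add Gm_smult)
  also have "\<dots> = Gm ((pderiv ^^ Suc n) (pderiv q))" by (rule 3)
  finally show ?case by (simp add: funpow_Suc_right del: funpow.simps)
qed

lemma He_degree[simp]: "degree (He n) = n" using He_deg by blast
lemma He_lead[simp]: "coeff (He n) n = 1" using He_deg by blast


lemma Gm_He_He_le: "i \<le> j \<Longrightarrow> Gm (He j * He i) = (if i = j then fact j else 0)"
proof -
  assume ij: "i \<le> j"
  have "Gm (He j * He i) = Gm ((pderiv^^j) (He i))" by (rule Gm_He_mult)
  also have "\<dots> = fact j * coeff (He i) j" using ij by (simp add: pderiv_funpow)
  also have "\<dots> = (if i = j then fact j else 0)"
    using ij coeff_eq_0[of "He i" j] by auto
  finally show ?thesis .
qed

lemma Gm_He_He: "Gm (He i * He j) = (if i = j then fact j else 0)"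
proof (cases "i \<le> j")
  case False
  then have "Gm (He i * He j) = 0" using Gm_He_He_le[of j i] by simp
  then show ?thesis using False by simp
next
  case True
  have e: "He i * He j = He j * He i" by (rule mult.commute)
  show ?thesis unfolding e by (rule Gm_He_He_le[OF True])
qed

lemma Gm_1[simp]: "Gm 1 = 1" by (metis Gm_const one_pCons)

lemma Gm_lin: "Gm [:a, b:] = a"
proof -
  have "degree [:a, b:] \<le> 1" by (simp add: degree_pCons_le)
  from Gm_le[OF this] show ?thesis by simp
qed

lemma Mehler:
  assumes "\<rho>^2 + \<sigma>^2 = 1"
  shows "Gm (pcompose (He n) [:\<rho> * x, \<sigma>:]) = \<rho>^n * poly (He n) x"
proof (induction n rule: He.induct)
  case 1 then show ?case by (simp add: pcompose_1)
next
  case 2 then show ?case by (simp add: pcompose_pCons Gm_lin)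
next
  case (3 n)
  define c where "c = [:\<rho> * x, \<sigma>:]"
  define g where "g k = pcompose (He k) c" for k
  have dc: "pderiv c = [:\<sigma>:]" by (simp add: c_def pderiv_pCons)
  have e: "g (Suc (Suc n)) = smult (\<rho> * x) (g (Suc n)) + pCons 0 (smult \<sigma> (g (Suc n))) - smult (real (Suc n)) (g n)"
    by (simp add: He.simps(3) g_def c_def pcompose_diff pcompose_mult pcompose_smult pcompose_pCons)
  have dg: "pderiv (g (Suc n)) = smult (\<sigma> * real (Suc n)) (g n)"
    by (simp add: g_def pderiv_pcompose He_pderiv_Suc dc pcompose_smult)
  have "Gm (g (Suc (Suc n))) = \<rho> * x * Gm (g (Suc n)) + \<sigma> * (\<sigma> * real (Suc n)) * Gm (g n) - real (Suc n) * Gm (g n)"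
    unfolding e by (simp add: Gm_diff Gm_add Gm_smult Gm_stein pderiv_smult dg)
  also have "\<dots> = \<rho> * x * Gm (g (Suc n)) + (\<sigma>^2 - 1) * real (Suc n) * Gm (g n)"
    by (simp add: algebra_simps power2_eq_square)
  also have "\<sigma>^2 - 1 = - (\<rho>^2)" using assms by linarith
  also have "\<rho> * x * Gm (g (Suc n)) + - (\<rho>^2) * real (Suc n) * Gm (g n)
     = \<rho> * x * (\<rho> ^ Suc n * poly (He (Suc n)) x) - \<rho>^2 * real (Suc n) * (\<rho>^n * poly (He n) x)"
    using 3 unfolding g_def c_def by simp
  also have "\<dots> = \<rho> ^ Suc (Suc n) * poly (He (Suc (Suc n))) x"
    by (simp add: He.simps(3) algebra_simps power2_eq_square)
  finally show ?case by (simp add: g_def c_def)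
qed

lemma Gm_He: "Gm (He n) = (if n = 0 then 1 else 0)"
  using Mehler[of 0 1 n 0] by simp

lemma He_decomp: "degree p \<le> m \<Longrightarrow> \<exists>a. p = (\<Sum>j\<le>m. smult (a j) (He j))"
proof (induction m arbitrary: p)
  case 0
  then have "p = [:coeff p 0:]" using degree_0_id[of p] by simp
  then have "p = smult (coeff p 0) (He 0)" by (metis He.simps(1) smult_one)
  then show ?case by auto
next
  case (Suc m)
  define q where "q = p - smult (coeff p (Suc m)) (He (Suc m))"
  have d1: "degree (smult (coeff p (Suc m)) (He (Suc m))) \<le> Suc m"
    using degree_smult_le[of "coeff p (Suc m)" "He (Suc m)"] by simp
  have dq: "degree q \<le> Suc m" unfolding q_def
    by (rule degree_diff_le[OF Suc.prems d1])
  have cq: "coeff q (Suc m) = 0" by (simp add: q_def)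
  have "degree q \<le> m"
  proof (rule ccontr)
    assume "\<not> degree q \<le> m"
    then have dd: "degree q = Suc m" using dq by simp
    then have "q \<noteq> 0" by auto
    then have "lead_coeff q \<noteq> 0" by simp
    then show False using cq dd by simp
  qed
  then obtain a where a: "q = (\<Sum>j\<le>m. smult (a j) (He j))" using Suc.IH by blast
  define a' where "a' = a(Suc m := coeff p (Suc m))"
  have "p = q + smult (coeff p (Suc m)) (He (Suc m))" by (simp add: q_def)
  also have "q = (\<Sum>j\<le>m. smult (a' j) (He j))"
    unfolding a by (rule sum.cong) (auto simp: a'_def)
  also have "(\<Sum>j\<le>m. smult (a' j) (He j)) + smult (coeff p (Suc m)) (He (Suc m))
      = (\<Sum>j\<le>Suc m. smult (a' j) (He j))"
    by (simp add: a'_def)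
  finally show ?case by blast
qed

lemma mom_integral: "has_bochner_integral lborel (\<lambda>x. std_normal_density x * x ^ n) (mom n)"
proof (cases "even n")
  case True
  then obtain k where k: "n = 2*k" by blast
  show ?thesis using std_normal_moment_even[of k] k by (simp add: mom_def)
next
  case False
  then obtain k where k: "n = 2*k+1" using oddE by blast
  show ?thesis using std_normal_moment_odd[of k] k by (simp add: mom_def)
qed

lemma Gm_integral: "has_bochner_integral lborel (\<lambda>x. std_normal_density x * poly q x) (Gm q)"
proof -
  have "has_bochner_integral lborel (\<lambda>x. \<Sum>n\<le>degree q. coeff q n * (std_normal_density x * x ^ n))
          (\<Sum>n\<le>degree q. coeff q n * mom n)"
    by (intro has_bochner_integral_sum has_bochner_integral_mult_right mom_integral)
  moreover have "(\<lambda>x. \<Sum>n\<le>degree q. coeff q n * (std_normal_density x * x ^ n))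
      = (\<lambda>x. std_normal_density x * poly q x)"
    by (auto simp: poly_altdef sum_distrib_left mult_ac)
  ultimately show ?thesis by (simp add: Gm_def)
qed

lemma Gm_integral_eq: "(LINT x|lborel. std_normal_density x * poly q x) = Gm q"
  using Gm_integral by (rule has_bochner_integral_integral_eq)

lemma gauss_exp_Gm:
  assumes "v \<ge> 0"
  shows "gauss_exp m v (poly p) = Gm (pcompose p [:m, sqrt v:])"
proof (cases "v = 0")
  case True
  then show ?thesis by (simp add: gauss_exp_def pcompose_pCons_0)
next
  case False
  define s where "s = sqrt v"
  have s: "s > 0" using assms False by (simp add: s_def)
  have "gauss_exp m v (poly p) = (LINT x|lborel. normal_density m s x * poly p x)"
    using False by (simp add: gauss_exp_def s_def)
  also have "\<dots> = \<bar>s\<bar> *\<^sub>R (LINT z|lborel. normal_density m s (m + s * z) * poly p (m + s * z))"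
    by (rule lborel_integral_real_affine) (use s in simp)
  also have "\<dots> = (LINT z|lborel. s * (normal_density m s (m + s * z) * poly p (m + s * z)))"
    using s by simp
  also have "\<dots> = (LINT z|lborel. std_normal_density z * poly (pcompose p [:m, s:]) z)"
  proof (rule Bochner_Integration.integral_cong[OF refl])
    fix z
    have "s * normal_density m s (m + s * z) = std_normal_density z"
      using s by (simp add: normal_density_def real_sqrt_mult power2_eq_square field_simps)
    moreover have "poly (pcompose p [:m, s:]) z = poly p (m + s * z)"
      by (simp add: poly_pcompose mult.commute)
    ultimately show "s * (normal_density m s (m + s * z) * poly p (m + s * z)) =
      std_normal_density z * poly (pcompose p [:m, s:]) z"
      by (metis mult.assoc)
  qed
  also have "\<dots> = Gm (pcompose p [:m, s:])" by (rule Gm_integral_eq)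
  finally show ?thesis by (simp add: s_def)
qed

lemma std_Gm: "std_gauss_exp (poly p) = Gm p"
  unfolding std_gauss_exp_def using gauss_exp_Gm[of 1 0 p] by simp

lemma std_sq_Gm: "std_gauss_exp (\<lambda>x. (poly p x)\<^sup>2) = Gm (p * p)"
proof -
  have "(\<lambda>x. (poly p x)\<^sup>2) = poly (p * p)" by (auto simp: power2_eq_square)
  then show ?thesis by (simp add: std_Gm)
qed

lemma mix_Gm: "v \<ge> 0 \<Longrightarrow> mixture_exp k w mu v (poly p) = (\<Sum>i<k. w i * Gm (pcompose p [:mu i, sqrt v:]))"
  unfolding mixture_exp_def by (simp add: gauss_exp_Gm)

lemma Gm_square_sum:
  "Gm ((\<Sum>j\<le>m. smult (c j) (He j)) * (\<Sum>j\<le>m. smult (c j) (He j))) = (\<Sum>j\<le>m. (c j)^2 * fact j)"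
proof -
  have "(\<Sum>j\<le>m. smult (c j) (He j)) * (\<Sum>j\<le>m. smult (c j) (He j))
      = (\<Sum>i\<le>m. \<Sum>j\<le>m. smult (c i * c j) (He i * He j))"
    by (simp add: sum_product mult_smult_left mult_smult_right mult.assoc mult.commute[of "c _" "c _"])
  then have "Gm ((\<Sum>j\<le>m. smult (c j) (He j)) * (\<Sum>j\<le>m. smult (c j) (He j)))
      = (\<Sum>i\<le>m. \<Sum>j\<le>m. c i * c j * (if i = j then fact j else 0))"
    by (simp add: Gm_sum Gm_smult Gm_He_He)
  also have "\<dots> = (\<Sum>i\<le>m. \<Sum>j\<le>m. (if i = j then c i * c j * fact j else 0))"
    by (intro sum.cong refl) auto
  also have "\<dots> = (\<Sum>i\<le>m. c i * c i * fact i)"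
    by (intro sum.cong refl) (simp add: sum.delta)
  finally show ?thesis by (simp add: power2_eq_square)
qed

theorem mainTheorem12:
  fixes k :: nat and w mu :: "nat \<Rightarrow> real" and \<delta> lam :: real and m' :: nat
  assumes w_pos: "\<And>i. i < k \<Longrightarrow> w i > 0"
    and w_sum: "(\<Sum>i<k. w i) = 1"
    and delta: "0 < \<delta>" "\<delta> \<le> 1"
    and m': "m' \<ge> 1"
    and lam: "lam \<ge> 0"
    and hyp: "\<And>p :: real poly. degree p \<le> m' \<Longrightarrow> std_gauss_exp (\<lambda>x. (poly p x)\<^sup>2) = 1 \<Longrightarrow>
               \<bar>mixture_exp k w mu (1 - \<delta>) (poly p) - std_gauss_exp (poly p)\<bar> \<le> lam"
  shows "\<And>p :: real poly. degree p \<le> m' \<Longrightarrow> std_gauss_exp (\<lambda>x. (poly p x)\<^sup>2) = 1 \<Longrightarrow>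
           \<bar>discrete_exp k w (\<lambda>i. mu i / sqrt \<delta>) (poly p) - std_gauss_exp (poly p)\<bar>
             \<le> sqrt (real m') * lam * \<delta> powr (- (real m' / 2))"
proof -
  fix p :: "real poly"
  assume deg: "degree p \<le> m'" and nrm: "std_gauss_exp (\<lambda>x. (poly p x)\<^sup>2) = 1"
  define L where "L q = mixture_exp k w mu (1 - \<delta>) (poly q) - std_gauss_exp (poly q)" for q
  define t where "t = sqrt (1 - \<delta>)"
  have v0: "1 - \<delta> \<ge> 0" using delta by simp
  have L_Gm: "L q = (\<Sum>i<k. w i * Gm (pcompose q [:mu i, t:])) - Gm q" for q
    unfolding L_def t_def by (simp add: mix_Gm[OF v0] std_Gm)
  have L_smult: "L (smult u q) = u * L q" for u q
    unfolding L_Gm by (simp add: pcompose_smult Gm_smult sum_distrib_left right_diff_distrib mult_ac)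
  obtain a where a: "p = (\<Sum>j\<le>m'. smult (a j) (He j))" using He_decomp[OF deg] by blast
  define s where "s = sqrt \<delta>"
  have s: "s > 0" using delta by (simp add: s_def)
  define c where "c j = a j / s ^ j" for j
  define r where "r = (\<Sum>j\<le>m'. smult (c j) (He j))"
  have degr: "degree r \<le> m'" unfolding r_def
    by (rule degree_sum_le) (use degree_smult_le order_trans in force)+
  have Gm_comb: "Gm (\<Sum>j\<le>m'. smult (e j) (He j)) = e 0" for e
  proof -
    have "Gm (\<Sum>j\<le>m'. smult (e j) (He j)) = (\<Sum>j\<le>m'. (if j = 0 then e j else 0))"
      by (simp add: Gm_sum Gm_smult Gm_He if_distrib cong: if_cong)
    also have "\<dots> = e 0" by (simp add: sum.delta')
    finally show ?thesis .
  qed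
  have Gp: "Gm p = Gm r" unfolding a r_def Gm_comb by (simp add: c_def)
  have st: "s^2 + t^2 = 1" using delta by (simp add: s_def t_def)
  have comp: "Gm (pcompose r [:mu i, t:]) = poly p (mu i / s)" for i
  proof -
    have mu: "mu i = s * (mu i / s)" using s by simp
    have "Gm (pcompose r [:mu i, t:]) = (\<Sum>j\<le>m'. c j * Gm (pcompose (He j) [:s * (mu i / s), t:]))"
      unfolding r_def by (subst mu) (simp add: pcompose_sum pcompose_smult Gm_sum Gm_smult)
    also have "\<dots> = (\<Sum>j\<le>m'. c j * (s ^ j * poly (He j) (mu i / s)))"
      by (intro sum.cong refl) (simp only: Mehler[OF st])
    also have "\<dots> = (\<Sum>j\<le>m'. a j * poly (He j) (mu i / s))"
      using s by (intro sum.cong refl) (simp add: c_def)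
    also have "\<dots> = poly p (mu i / s)" unfolding a by (simp add: poly_sum)
    finally show ?thesis .
  qed
  have LHS: "discrete_exp k w (\<lambda>i. mu i / sqrt \<delta>) (poly p) - std_gauss_exp (poly p) = L r"
    unfolding L_Gm discrete_exp_def std_Gm by (simp add: comp Gp s_def)
  have Gpp: "Gm (p * p) = (\<Sum>j\<le>m'. (a j)^2 * fact j)" unfolding a by (rule Gm_square_sum)
  have Grr: "Gm (r * r) = (\<Sum>j\<le>m'. (c j)^2 * fact j)" unfolding r_def by (rule Gm_square_sum)
  have one: "Gm (p * p) = 1" using nrm by (simp add: std_sq_Gm)
  have cj: "(c j)^2 = (a j)^2 / \<delta> ^ j" for j
  proof -
    have "(s ^ j)^2 = (s^2)^j" by (metis power_mult mult.commute)
    also have "s^2 = \<delta>" using delta by (simp add: s_def)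
    finally show ?thesis by (simp add: c_def power_divide)
  qed
  have lowr: "Gm (r * r) \<ge> 1"
  proof -
    have "(a j)^2 * fact j \<le> (c j)^2 * fact j" for j
    proof -
      have "\<delta> ^ j \<le> 1" "\<delta> ^ j > 0" using delta by (auto intro: power_le_one)
      then have "(a j)^2 \<le> (a j)^2 / \<delta> ^ j" by (simp add: le_divide_eq mult_left_le)
      then have "(a j)^2 * fact j \<le> (a j)^2 / \<delta>^j * fact j" by (rule mult_right_mono) simp
      then show ?thesis by (simp add: cj)
    qed
    then have "Gm (p * p) \<le> Gm (r * r)" unfolding Gpp Grr by (intro sum_mono) auto
    then show ?thesis using one by simp
  qed
  have upr: "Gm (r * r) \<le> 1 / \<delta> ^ m'"
  proof -
    have "(c j)^2 * fact j \<le> (a j)^2 * fact j / \<delta> ^ m'" if "j \<le> m'" for j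
    proof -
      have "\<delta> ^ m' \<le> \<delta> ^ j" using delta that by (simp add: power_decreasing)
      moreover have "\<delta> ^ m' > 0" using delta by simp
      ultimately have "(a j)^2 / \<delta> ^ j \<le> (a j)^2 / \<delta> ^ m'"
        by (intro divide_left_mono) auto
      then have "(a j)^2 / \<delta>^j * fact j \<le> (a j)^2 / \<delta>^m' * fact j" by (rule mult_right_mono) simp
      then show ?thesis unfolding cj by simp
    qed
    then have "Gm (r * r) \<le> (\<Sum>j\<le>m'. (a j)^2 * fact j / \<delta> ^ m')" unfolding Grr by (intro sum_mono) auto
    also have "\<dots> = Gm (p * p) / \<delta> ^ m'" unfolding Gpp by (simp add: sum_divide_distrib)
    finally show ?thesis using one by simp
  qed
  define N where "N = sqrt (Gm (r * r))"
  have N: "N \<ge> 1" using lowr by (simp add: N_def)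
  define r' where "r' = smult (1 / N) r"
  have "degree r' \<le> m'" using degr degree_smult_le order_trans unfolding r'_def by blast
  moreover have "std_gauss_exp (\<lambda>x. (poly r' x)\<^sup>2) = 1"
  proof -
    have "Gm (r' * r') = Gm (r * r) / N^2" by (simp add: r'_def Gm_smult power2_eq_square)
    also have "N^2 = Gm (r * r)" using lowr by (simp add: N_def)
    finally show ?thesis using lowr by (simp add: std_sq_Gm)
  qed
  ultimately have "\<bar>L r'\<bar> \<le> lam" using hyp unfolding L_def by blast
  then have "\<bar>L r\<bar> / N \<le> lam" using N by (simp add: r'_def L_smult abs_mult)
  then have b1: "\<bar>L r\<bar> \<le> lam * N" using N by (simp add: divide_le_eq)
  have "N \<le> sqrt (1 / \<delta> ^ m')" unfolding N_def using upr by simp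
  also have "sqrt (1 / \<delta> ^ m') = \<delta> powr (- (real m' / 2))"
    using delta by (simp add: powr_half_sqrt[symmetric] powr_realpow[symmetric] powr_minus_divide[symmetric] powr_powr)
  finally have b2: "N \<le> \<delta> powr (- (real m' / 2))" .
  have "\<bar>L r\<bar> \<le> lam * \<delta> powr (- (real m' / 2))" using b1 b2 lam by (meson mult_left_mono order_trans)
  also have "\<dots> \<le> sqrt (real m') * (lam * \<delta> powr (- (real m' / 2)))"
  proof -
    have "1 \<le> sqrt (real m')" using m' by simp
    moreover have "0 \<le> lam * \<delta> powr (- (real m' / 2))" using lam by simp
    ultimately have "1 * (lam * \<delta> powr (- (real m' / 2))) \<le> sqrt (real m') * (lam * \<delta> powr (- (real m' / 2)))"
      by (rule mult_right_mono)
    then show ?thesis by simp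
  qed
  finally show "\<bar>discrete_exp k w (\<lambda>i. mu i / sqrt \<delta>) (poly p) - std_gauss_exp (poly p)\<bar>
             \<le> sqrt (real m') * lam * \<delta> powr (- (real m' / 2))" unfolding LHS by (simp add: mult.assoc)
qed

end
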